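(* Let $n,d\ge1$, $\omega\ge0$, $\alpha\in(0,1]$, $K_\omega,K_\alpha\in(0,d]$, and $0<\mu\le L\le L_{\max}$. For $r\in[0,1]$ put $K^r=(1-r)K_\omega+rK_\alpha$, $\mu^r_{\omega,\alpha}=rd/K^r$, $$\mathfrak m^r_{\mathrm{EF21\text{-}P+DIANA}}=K^r\Big(\frac{L}{\alpha\mu}+\frac{\omega L_{\max}}{n\mu}+\omega\Big)+d,$$ $$\mathfrak m^r_{\mathrm{realistic}}=K^r\Big(\sqrt{\tfrac{L\max\{\omega+1,\mu^r_{\omega,\alpha}\}}{\alpha\mu}}+\sqrt{\tfrac{L_{\max}\omega\max\{\omega+1,\mu^r_{\omega,\alpha}\}}{n\mu}}+\tfrac1\alpha+\omega+\mu^r_{\omega,\alpha}\Big)+d.$$ Then for all $r\in[0,1]$, $\mathfrak m^r_{\mathrm{realistic}}=\widetilde{\mathcal O}\big(\mathfrak m^r_{\mathrm{EF21\text{-}P+DIANA}}\big)$, i.e. $\mathfrak m^r_{\mathrm{realistic}}\le C\,\mathfrak m^r_{\mathrm{EF21\text{-}P+DIANA}}$ for a universal constant $C$ (up to logarithmic factors).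
   Context: $\mathfrak m^r_{\mathrm{EF21\text{-}P+DIANA}}$ is (up to logarithmic factors) the total communication complexity of the previous method EF21-P + DIANA, and $\mathfrak m^r_{\mathrm{realistic}}$ is (up to logarithmic factors) that of the new method 2Direction with its hyper-parameters chosen without knowledge of $L_{\max}/L$, for minimizing $f=\frac1n\sum_i f_i$ on $\mathbb R^d$ with $n$ workers, each $f_i$ being $L_i$-smooth and convex, $L_{\max}=\max_iL_i$, $f$ being $L$-smooth and $\mu$-strongly convex. $\omega$ and $K_\omega$ are the variance parameter and expected density of the worker (unbiased) compressors, $\alpha$ and $K_\alpha$ the contraction parameter and expected density of the server (biased) compressor, and the total communication complexity is $(1-r)\cdot(\text{worker-to-server cost})+r\cdot(\text{server-to-worker cost})$. *)

theory Defs
  imports Complex_Main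
begin

definition K_r :: "real \<Rightarrow> real \<Rightarrow> real \<Rightarrow> real" where
  "K_r K\<omega> K\<alpha> r = (1 - r) * K\<omega> + r * K\<alpha>"

definition mu_r :: "nat \<Rightarrow> real \<Rightarrow> real \<Rightarrow> real \<Rightarrow> real" where
  "mu_r d K\<omega> K\<alpha> r = r * real d / K_r K\<omega> K\<alpha> r"

definition m_EF21P_DIANA ::
  "nat \<Rightarrow> nat \<Rightarrow> real \<Rightarrow> real \<Rightarrow> real \<Rightarrow> real \<Rightarrow> real \<Rightarrow> real \<Rightarrow> real \<Rightarrow> real \<Rightarrow> real" where
  "m_EF21P_DIANA n d \<omega> \<alpha> K\<omega> K\<alpha> \<mu> L Lmax r =
     K_r K\<omega> K\<alpha> r * (L / (\<alpha> * \<mu>) + \<omega> * Lmax / (real n * \<mu>) + \<omega>) + real d"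

definition m_realistic ::
  "nat \<Rightarrow> nat \<Rightarrow> real \<Rightarrow> real \<Rightarrow> real \<Rightarrow> real \<Rightarrow> real \<Rightarrow> real \<Rightarrow> real \<Rightarrow> real \<Rightarrow> real" where
  "m_realistic n d \<omega> \<alpha> K\<omega> K\<alpha> \<mu> L Lmax r =
     (let M = max (\<omega> + 1) (mu_r d K\<omega> K\<alpha> r) in
      K_r K\<omega> K\<alpha> r *
        (sqrt (L * M / (\<alpha> * \<mu>)) + sqrt (Lmax * \<omega> * M / (real n * \<mu>))
         + 1 / \<alpha> + \<omega> + mu_r d K\<omega> K\<alpha> r) + real d)"

end

theory Submission
  imports Defs
begin

lemma sqrt_amgm: "0 \<le> x \<Longrightarrow> 0 \<le> y \<Longrightarrow> sqrt (x * y) \<le> (x + y) / 2"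
proof -
  assume x: "0 \<le> x" and y: "0 \<le> y"
  have "(sqrt x - sqrt y)^2 \<ge> 0" by simp
  hence "2 * (sqrt x * sqrt y) \<le> x + y"
    using x y by (simp add: power2_eq_square algebra_simps real_sqrt_mult_self
        flip: real_sqrt_mult)
  thus ?thesis by (simp add: real_sqrt_mult)
qed

lemma main:
  fixes n d :: nat and \<omega> \<alpha> K\<omega> K\<alpha> \<mu> L Lmax r :: real
  assumes "n \<ge> 1" "d \<ge> 1" "\<omega> \<ge> 0" "0 < \<alpha>" "\<alpha> \<le> 1"
    "0 < K\<omega>" "K\<omega> \<le> real d" "0 < K\<alpha>" "K\<alpha> \<le> real d"
    "0 < \<mu>" "\<mu> \<le> L" "L \<le> Lmax" "0 \<le> r" "r \<le> 1"
  shows "m_realistic n d \<omega> \<alpha> K\<omega> K\<alpha> \<mu> L Lmax r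
         \<le> 3 * m_EF21P_DIANA n d \<omega> \<alpha> K\<omega> K\<alpha> \<mu> L Lmax r"
proof -
  define K where "K = K_r K\<omega> K\<alpha> r"
  define m where "m = mu_r d K\<omega> K\<alpha> r"
  define M where "M = max (\<omega> + 1) m"
  define A where "A = L / (\<alpha> * \<mu>)"
  define B where "B = \<omega> * Lmax / (real n * \<mu>)"
  have K0: "K > 0" unfolding K_def K_r_def
  proof (cases "r = 0")
    case False
    hence "r * K\<alpha> > 0" using assms by simp
    moreover have "(1 - r) * K\<omega> \<ge> 0" using assms by simp
    ultimately show "(1 - r) * K\<omega> + r * K\<alpha> > 0" by linarith
  qed (use assms in simp)
  have Km: "K * m = r * d" unfolding m_def mu_r_def K_def[symmetric] using K0 by simp
  have rd: "r * d \<le> d" using assms by (simp add: mult_left_le_one_le)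
  have m0: "m \<ge> 0" unfolding m_def mu_r_def K_def[symmetric] using K0 assms by simp
  have A1: "A \<ge> 1" unfolding A_def using assms
    by (simp add: le_divide_eq_1) (metis mult_left_le_one_le less_imp_le order_trans)
  have B0: "B \<ge> 0" unfolding B_def using assms by simp
  have ia: "1 / \<alpha> \<le> A" unfolding A_def using assms
    by (simp add: divide_simps)
  have M0: "M \<ge> 0" unfolding M_def using assms by simp
  have KM: "K * M \<le> K * \<omega> + K * A + d"
  proof -
    have "K * M = max (K * (\<omega>+1)) (K * m)" unfolding M_def using K0
      by (simp add: max_def mult_left_mono)
    moreover have "K \<le> K * A" using K0 A1 by simp
    moreover have "K * \<omega> \<ge> 0" "K * A \<ge> 0" using K0 assms A1 by auto
    moreover have "K * (\<omega> + 1) = K * \<omega> + K" by (simp add: algebra_simps)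
    ultimately show ?thesis using Km rd by (simp add: max_def)
  qed
  have s1: "K * sqrt (A * M) \<le> K * ((A + M) / 2)"
    using sqrt_amgm[of A M] A1 M0 K0 by (simp add: mult_left_mono)
  have s2: "K * sqrt (B * M) \<le> K * ((B + M) / 2)"
    using sqrt_amgm[of B M] B0 M0 K0 by (simp add: mult_left_mono)
  have s3: "K * (1/\<alpha>) \<le> K * A" using ia K0 by (intro mult_left_mono) auto
  have lhs: "m_realistic n d \<omega> \<alpha> K\<omega> K\<alpha> \<mu> L Lmax r
     = K * sqrt (A * M) + K * sqrt (B * M) + K * (1/\<alpha>) + K * \<omega> + K * m + d"
    unfolding m_realistic_def Let_def K_def[symmetric] m_def[symmetric] M_def[symmetric]
      A_def B_def
    by (simp add: algebra_simps times_divide_eq_right mult.assoc)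
  have rhs: "m_EF21P_DIANA n d \<omega> \<alpha> K\<omega> K\<alpha> \<mu> L Lmax r = K * A + K * B + K * \<omega> + d"
    unfolding m_EF21P_DIANA_def K_def A_def B_def by (simp add: algebra_simps)
  have p: "K * B \<ge> 0" "K * \<omega> \<ge> 0" using K0 B0 assms by auto
  have e: "K * ((A + M)/2) = (K*A)/2 + (K*M)/2" "K * ((B + M)/2) = (K*B)/2 + (K*M)/2"
    by (simp_all add: algebra_simps)
  have lin: "a1 + b1 + c1 + w1 + u1 + z1 \<le> 3 * (x1 + y1 + w1 + z1)"
    if "a1 \<le> x1/2 + v1/2" "b1 \<le> y1/2 + v1/2" "c1 \<le> x1" "v1 \<le> w1 + x1 + z1" "u1 \<le> z1"
       "0 \<le> y1" "0 \<le> w1" "0 \<le> x1" for a1 b1 c1 w1 x1 y1 u1 v1 z1 :: real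
    using that by (simp add: field_simps)
  have s1': "K * sqrt (A * M) \<le> K*A/2 + K*M/2" using s1 e(1) by simp
  have s2': "K * sqrt (B * M) \<le> K*B/2 + K*M/2" using s2 e(2) by simp
  have KA: "0 \<le> K * A" using K0 A1 by simp
  have um: "K * m \<le> real d" using Km rd by simp
  show ?thesis unfolding lhs rhs
    by (rule lin[OF s1' s2' s3 KM um p(1) p(2) KA])
qed

theorem theorem4:
  shows "\<exists>C::real. C > 0 \<and>
    (\<forall>(n::nat) (d::nat) (\<omega>::real) (\<alpha>::real) (K\<omega>::real) (K\<alpha>::real)
       (\<mu>::real) (L::real) (Lmax::real) (r::real).
       n \<ge> 1 \<and> d \<ge> 1 \<and> \<omega> \<ge> 0 \<and> 0 < \<alpha> \<and> \<alpha> \<le> 1 \<and>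
       0 < K\<omega> \<and> K\<omega> \<le> real d \<and> 0 < K\<alpha> \<and> K\<alpha> \<le> real d \<and>
       0 < \<mu> \<and> \<mu> \<le> L \<and> L \<le> Lmax \<and> 0 \<le> r \<and> r \<le> 1 \<longrightarrow>
       m_realistic n d \<omega> \<alpha> K\<omega> K\<alpha> \<mu> L Lmax r
         \<le> C * m_EF21P_DIANA n d \<omega> \<alpha> K\<omega> K\<alpha> \<mu> L Lmax r)"
  by (rule exI[of _ 3]) (auto intro: main)

end
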